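(* In the allocation problem described in the context, let $\pi=(\pi_1,\ldots,\pi_n)$ be the agents' preference lists and let $a$ be a Pareto efficient allocation. Then there exist speed functions $\eta_1,\ldots,\eta_n$ such that the extended SG mechanism with these speeds and truthful bids $\pi$ produces exactly the allocation $a$.
   Context: There are $m$ distinct divisible goods; good $j$ is available in amount $q_j>0$. There are $n$ agents; agent $i$ is to receive a total of $r_i>0$, with $\sum_j q_j=\sum_i r_i$. An allocation is a family $a_{ij}\ge 0$ with $\sum_j a_{ij}=r_i$ and $\sum_i a_{ij}=q_j$; $a_{i*}=(a_{i1},\ldots,a_{im})$ is agent $i$'s share. Each agent $i$ has a preference list $\pi_i$, a permutation of the goods ($\pi_i(1)$ most preferred). Agent $i$ prefers $a_{i*}$ to $b_{i*}$, written $a_{i*}>_i b_{i*}$, if the leftmost nonzero coordinate of $(a_{i\pi_i(\ell)}-b_{i\pi_i(\ell)})_{\ell=1}^m$ is positive. An allocation $a$ is Pareto efficient if there is no allocation $b$ such that every agent $i$ has $b_{i*}=a_{i*}$ or $b_{i*}>_i a_{i*}$, and some agent $i$ has $b_{i*}>_i a_{i*}$. A speed function for agent $i$ is a nonnegative integrable function $\eta_i:[0,1]\to\mathbb{R}_{\ge 0}$ with $\int_0^1\eta_i(t)\,dt=r_i$. The extended SG mechanism with speeds $\eta_1,\ldots,\eta_n$: each agent $i$ bids a permutation $\sigma_i$ of the goods; over time $t\in[0,1]$, each agent $i$ receives, at rate $\eta_i(t)$, the good highest in $\sigma_i$ among those not yet exhausted (a good is exhausted when the total amount handed out equals $q_j$;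 several agents may receive a good simultaneously; upon exhaustion, agents receiving it switch to their next non-exhausted good). The resulting allocation records the total amount of each good each agent receives. *)

theory Defs
  imports "HOL-Analysis.Analysis"
begin

text \<open>Agents are indexed by 0..<n, goods by 0..<m. A preference list / bid of an
agent is a permutation p of {..<m}; p 0 is the most preferred good.\<close>

definition is_pref_list :: "nat \<Rightarrow> (nat \<Rightarrow> nat) \<Rightarrow> bool" where
  "is_pref_list m p \<longleftrightarrow> bij_betw p {..<m} {..<m}"

definition is_allocation ::
  "nat \<Rightarrow> nat \<Rightarrow> (nat \<Rightarrow> real) \<Rightarrow> (nat \<Rightarrow> real) \<Rightarrow> (nat \<Rightarrow> nat \<Rightarrow> real) \<Rightarrow> bool" where
  "is_allocation n m q r a \<longleftrightarrow>
     (\<forall>i<n. \<forall>j<m. 0 \<le> a i j) \<and>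
     (\<forall>i<n. (\<Sum>j<m. a i j) = r i) \<and>
     (\<forall>j<m. (\<Sum>i<n. a i j) = q j)"

definition lex_prefers :: "nat \<Rightarrow> (nat \<Rightarrow> nat) \<Rightarrow> (nat \<Rightarrow> real) \<Rightarrow> (nat \<Rightarrow> real) \<Rightarrow> bool" where
  "lex_prefers m p x y \<longleftrightarrow>
     (\<exists>l<m. (\<forall>k<l. x (p k) = y (p k)) \<and> x (p l) > y (p l))"

definition same_share :: "nat \<Rightarrow> (nat \<Rightarrow> real) \<Rightarrow> (nat \<Rightarrow> real) \<Rightarrow> bool" where
  "same_share m x y \<longleftrightarrow> (\<forall>j<m. x j = y j)"

definition pareto_efficient ::
  "nat \<Rightarrow> nat \<Rightarrow> (nat \<Rightarrow> real) \<Rightarrow> (nat \<Rightarrow> real) \<Rightarrow> (nat \<Rightarrow> nat \<Rightarrow> nat)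
     \<Rightarrow> (nat \<Rightarrow> nat \<Rightarrow> real) \<Rightarrow> bool" where
  "pareto_efficient n m q r \<pi> a \<longleftrightarrow>
     is_allocation n m q r a \<and>
     \<not> (\<exists>b. is_allocation n m q r b \<and>
            (\<forall>i<n. same_share m (b i) (a i) \<or> lex_prefers m (\<pi> i) (b i) (a i)) \<and>
            (\<exists>i<n. lex_prefers m (\<pi> i) (b i) (a i)))"

definition speed_function :: "(real \<Rightarrow> real) \<Rightarrow> real \<Rightarrow> bool" where
  "speed_function \<eta> r \<longleftrightarrow>
     (\<forall>t\<in>{0..1}. 0 \<le> \<eta> t) \<and>
     set_integrable lborel {0..1::real} \<eta> \<and>
     set_lebesgue_integral lborel {0..1::real} \<eta> = r"

text \<open>A run is described by exhaustion times tau j of the goods.\<close>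

definition sg_current :: "nat \<Rightarrow> (nat \<Rightarrow> nat \<Rightarrow> nat) \<Rightarrow> (nat \<Rightarrow> real) \<Rightarrow> nat \<Rightarrow> real \<Rightarrow> nat option" where
  "sg_current m \<sigma> \<tau> i t =
     (if \<exists>k<m. t < \<tau> (\<sigma> i k)
      then Some (\<sigma> i (LEAST k. k < m \<and> t < \<tau> (\<sigma> i k)))
      else None)"

definition sg_amount ::
  "nat \<Rightarrow> (nat \<Rightarrow> real \<Rightarrow> real) \<Rightarrow> (nat \<Rightarrow> nat \<Rightarrow> nat) \<Rightarrow> (nat \<Rightarrow> real)
     \<Rightarrow> nat \<Rightarrow> nat \<Rightarrow> real \<Rightarrow> real" where
  "sg_amount m \<eta> \<sigma> \<tau> i j t =
     set_lebesgue_integral lborel {0..t}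
       (\<lambda>s. if sg_current m \<sigma> \<tau> i s = Some j then \<eta> i s else 0)"

definition sg_run ::
  "nat \<Rightarrow> nat \<Rightarrow> (nat \<Rightarrow> real) \<Rightarrow> (nat \<Rightarrow> real \<Rightarrow> real) \<Rightarrow> (nat \<Rightarrow> nat \<Rightarrow> nat)
     \<Rightarrow> (nat \<Rightarrow> real) \<Rightarrow> bool" where
  "sg_run n m q \<eta> \<sigma> \<tau> \<longleftrightarrow>
     (\<forall>j<m. 0 \<le> \<tau> j \<and> \<tau> j \<le> 1 \<and>
        (\<Sum>i<n. sg_amount m \<eta> \<sigma> \<tau> i j (\<tau> j)) = q j \<and>
        (\<forall>t. 0 \<le> t \<and> t < \<tau> j \<longrightarrow> (\<Sum>i<n. sg_amount m \<eta> \<sigma> \<tau> i j t) < q j))"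

definition sg_produces ::
  "nat \<Rightarrow> nat \<Rightarrow> (nat \<Rightarrow> real) \<Rightarrow> (nat \<Rightarrow> real \<Rightarrow> real) \<Rightarrow> (nat \<Rightarrow> nat \<Rightarrow> nat)
     \<Rightarrow> (nat \<Rightarrow> nat \<Rightarrow> real) \<Rightarrow> bool" where
  "sg_produces n m q \<eta> \<sigma> a \<longleftrightarrow>
     (\<exists>\<tau>. sg_run n m q \<eta> \<sigma> \<tau>) \<and>
     (\<forall>\<tau>. sg_run n m q \<eta> \<sigma> \<tau> \<longrightarrow>
        (\<forall>i<n. \<forall>j<m. sg_amount m \<eta> \<sigma> \<tau> i j 1 = a i j))"

end

theory Submission
  imports Defs
begin

lemma meas_int:
  fixes t u v :: real assumes "0 \<le> u" "u \<le> v"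
  shows "measure lborel ({0..t} \<inter> {u..<v}) = (if t < u then 0 else if t < v then t - u else v - u)"
proof (cases "t < u")
  case True
  then have "{0..t} \<inter> {u..<v} = {}" by auto
  then show ?thesis using True by simp
next
  case False
  show ?thesis
  proof (cases "t < v")
    case True
    then have "{0..t} \<inter> {u..<v} = {u..t}" using False assms by auto
    then show ?thesis using True False by simp
  next
    case F2: False
    then have "{0..t} \<inter> {u..<v} = {u..<v}" using False assms by auto
    then show ?thesis using F2 False assms by simp
  qed
qed

lemma ind_int:
  fixes c u v t :: real assumes "u \<le> v"
  shows "set_integrable lborel {0..t} (\<lambda>s. c * indicator {u..<v} s)"
    and "set_lebesgue_integral lborel {0..t} (\<lambda>s. c * indicator {u..<v} s) = c * measure lborel ({0..t} \<inter> {u..<v})"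
proof -
  have eq: "(\<lambda>s. indicator {0..t} s *\<^sub>R (c * indicator {u..<v} s)) = (\<lambda>s. c * indicator ({0..t} \<inter> {u..<v}) s)"
    by (auto simp: indicator_def)
  have fin: "emeasure lborel ({0..t} \<inter> {u..<v::real}) < \<infinity>"
  proof -
    have "emeasure lborel ({0..t} \<inter> {u..<v::real}) \<le> emeasure lborel {u..<v}"
      by (intro emeasure_mono) auto
    also have "\<dots> < \<infinity>" using assms by simp
    finally show ?thesis .
  qed
  have ii: "integrable lborel (indicator ({0..t} \<inter> {u..<v}) :: real \<Rightarrow> real)"
    using fin by (intro integrable_real_indicator) auto
  show "set_integrable lborel {0..t} (\<lambda>s. c * indicator {u..<v} s)"
    unfolding set_integrable_def eq using ii by simp
  show "set_lebesgue_integral lborel {0..t} (\<lambda>s. c * indicator {u..<v} s) = c * measure lborel ({0..t} \<inter> {u..<v})"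
    unfolding set_lebesgue_integral_def eq using ii fin by simp
qed


locale sgl =
  fixes n m :: nat and q r :: "nat \<Rightarrow> real" and \<pi> :: "nat \<Rightarrow> nat \<Rightarrow> nat"
    and a :: "nat \<Rightarrow> nat \<Rightarrow> real"
  assumes qpos: "\<forall>j<m. q j > 0"
    and pref: "\<forall>i<n. is_pref_list m (\<pi> i)"
    and pe: "pareto_efficient n m q r \<pi> a"
begin

lemma alloc: "is_allocation n m q r a" using pe unfolding pareto_efficient_def by blast

lemma anonneg: "i < n \<Longrightarrow> j < m \<Longrightarrow> 0 \<le> a i j"
  using alloc unfolding is_allocation_def by blast

lemma pi_lt: "i < n \<Longrightarrow> l < m \<Longrightarrow> \<pi> i l < m"
  using pref unfolding is_pref_list_def bij_betw_def by auto

lemma pi_inj: "i < n \<Longrightarrow> l < m \<Longrightarrow> l' < m \<Longrightarrow> \<pi> i l = \<pi> i l' \<Longrightarrow> l = l'"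
  using pref unfolding is_pref_list_def bij_betw_def inj_on_def by auto

lemma pi_surj: "i < n \<Longrightarrow> y < m \<Longrightarrow> \<exists>l<m. \<pi> i l = y"
  using pref unfolding is_pref_list_def bij_betw_def by (metis imageE lessThan_iff)

definition E :: "(nat \<times> nat) set" where
  "E = {(x,y). \<exists>i<n. \<exists>l' l. l' < l \<and> l < m \<and> \<pi> i l' = x \<and> \<pi> i l = y \<and> a i y > 0}"

lemma acyclic: "(x, x) \<notin> E\<^sup>+"
proof
  assume "(x, x) \<in> E\<^sup>+"
  then obtain N where N: "N > 0" "(x, x) \<in> E ^^ N" using trancl_power by blast
  then obtain f where f: "f 0 = x" "f N = x" "\<forall>t<N. (f t, f (Suc t)) \<in> E"
    using relpow_fun_conv by metis
  have "\<forall>t. \<exists>z. t < N \<longrightarrow> (fst z < n \<and> fst (snd z) < snd (snd z) \<and> snd (snd z) < m \<and>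
      \<pi> (fst z) (fst (snd z)) = f t \<and> \<pi> (fst z) (snd (snd z)) = f (Suc t) \<and> a (fst z) (f (Suc t)) > 0)"
  proof
    fix t
    show "\<exists>z. t < N \<longrightarrow> (fst z < n \<and> fst (snd z) < snd (snd z) \<and> snd (snd z) < m \<and>
      \<pi> (fst z) (fst (snd z)) = f t \<and> \<pi> (fst z) (snd (snd z)) = f (Suc t) \<and> a (fst z) (f (Suc t)) > 0)"
    proof (cases "t < N")
      case True
      then have "(f t, f (Suc t)) \<in> E" using f by blast
      then obtain i l' l where "i<n" "l' < l" "l < m" "\<pi> i l' = f t" "\<pi> i l = f (Suc t)" "a i (f (Suc t)) > 0"
        unfolding E_def by auto
      then show ?thesis by (intro exI[of _ "(i,l',l)"]) auto
    qed auto
  qed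
  then obtain z where z: "\<And>t. t < N \<Longrightarrow> fst (z t) < n \<and> fst (snd (z t)) < snd (snd (z t)) \<and> snd (snd (z t)) < m \<and>
      \<pi> (fst (z t)) (fst (snd (z t))) = f t \<and> \<pi> (fst (z t)) (snd (snd (z t))) = f (Suc t) \<and> a (fst (z t)) (f (Suc t)) > 0"
    by metis
  define ag where "ag t = fst (z t)" for t
  define lp where "lp t = fst (snd (z t))" for t
  define lq where "lq t = snd (snd (z t))" for t
  have ag: "\<And>t. t < N \<Longrightarrow> ag t < n" and lpq: "\<And>t. t < N \<Longrightarrow> lp t < lq t" and lq: "\<And>t. t < N \<Longrightarrow> lq t < m"
    and fp: "\<And>t. t < N \<Longrightarrow> \<pi> (ag t) (lp t) = f t" and fq: "\<And>t. t < N \<Longrightarrow> \<pi> (ag t) (lq t) = f (Suc t)"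
    and apos: "\<And>t. t < N \<Longrightarrow> a (ag t) (f (Suc t)) > 0"
    using z unfolding ag_def lp_def lq_def by auto
  have flt: "f t < m" if "t \<le> N" for t
  proof (cases "t < N")
    case True then show ?thesis using fp[OF True] pi_lt ag lpq lq by (metis order.strict_trans)
  next
    case False then have "t = N" using that by simp
    then show ?thesis using f fp[OF N(1)] pi_lt ag lpq lq N(1) by (metis order.strict_trans)
  qed
  define D where "D i j = (\<Sum>t<N. if ag t = i then (if j = f t then 1 else 0) - (if j = f (Suc t) then 1 else 0) else (0::real))" for i j
  define \<delta> where "\<delta> = Min ((\<lambda>t. a (ag t) (f (Suc t))) ` {..<N})"
  have \<delta>pos: "\<delta> > 0" unfolding \<delta>_def using N(1) apos by (subst Min_gr_iff) auto
  have \<delta>le: "\<And>t. t < N \<Longrightarrow> \<delta> \<le> a (ag t) (f (Suc t))" unfolding \<delta>_def by (intro Min_le) auto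
  define \<epsilon> where "\<epsilon> = \<delta> / real N"
  have \<epsilon>pos: "\<epsilon> > 0" unfolding \<epsilon>_def using \<delta>pos N by simp
  define b where "b i j = a i j + \<epsilon> * D i j" for i j
  have Dge: "D i j \<ge> - real N" for i j
  proof -
    have "D i j \<ge> (\<Sum>t<N. (-1::real))" unfolding D_def by (intro sum_mono) auto
    then show ?thesis by simp
  qed
  have bnonneg: "0 \<le> b i j" if "i < n" "j < m" for i j
  proof (cases "D i j \<ge> 0")
    case True then show ?thesis unfolding b_def using anonneg[OF that] \<epsilon>pos by simp
  next
    case False
    have "\<exists>t<N. ag t = i \<and> j = f (Suc t)"
    proof (rule ccontr)
      assume "\<not> ?thesis"
      then have "D i j \<ge> 0" unfolding D_def by (intro sum_nonneg) auto
      then show False using False by simp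
    qed
    then obtain t where t: "t < N" "ag t = i" "j = f (Suc t)" by blast
    have "\<delta> \<le> a i j" using \<delta>le[OF t(1)] t by simp
    moreover have "\<epsilon> * D i j \<ge> \<epsilon> * (- real N)" using Dge \<epsilon>pos by (intro mult_left_mono) auto
    moreover have "\<epsilon> * (- real N) = - \<delta>" unfolding \<epsilon>_def using N by simp
    ultimately show ?thesis unfolding b_def by linarith
  qed
  have rowD: "(\<Sum>j<m. D i j) = 0" for i
  proof -
    have "(\<Sum>j<m. D i j) = (\<Sum>t<N. \<Sum>j<m. if ag t = i then (if j = f t then 1 else 0) - (if j = f (Suc t) then 1 else 0) else (0::real))"
      unfolding D_def by (rule sum.swap)
    also have "\<dots> = (\<Sum>t<N. 0)"
    proof (intro sum.cong refl)
      fix t assume t: "t \<in> {..<N}"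
      have "f t < m" "f (Suc t) < m" using flt t by auto
      then show "(\<Sum>j<m. if ag t = i then (if j = f t then 1 else 0) - (if j = f (Suc t) then 1 else 0) else (0::real)) = 0"
        by (cases "ag t = i") (simp_all add: sum_subtractf)
    qed
    finally show ?thesis by simp
  qed
  have colD: "(\<Sum>i<n. D i j) = 0" for j
  proof -
    have "(\<Sum>i<n. D i j) = (\<Sum>t<N. \<Sum>i<n. if ag t = i then (if j = f t then 1 else 0) - (if j = f (Suc t) then 1 else 0) else (0::real))"
      unfolding D_def by (rule sum.swap)
    also have "\<dots> = (\<Sum>t<N. (if j = f t then 1 else 0) - (if j = f (Suc t) then 1 else (0::real)))"
    proof (intro sum.cong refl)
      fix t assume t: "t \<in> {..<N}"
      then have "ag t < n" using ag by auto
      then show "(\<Sum>i<n. if ag t = i then (if j = f t then 1 else 0) - (if j = f (Suc t) then 1 else 0) else (0::real))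
          = (if j = f t then 1 else 0) - (if j = f (Suc t) then 1 else (0::real))"
        by (subst sum.delta') auto
    qed
    also have "\<dots> = - (\<Sum>t<N. (if j = f (Suc t) then 1 else 0) - (if j = f t then 1 else (0::real)))"
      by (simp add: sum_negf[symmetric])
    also have "\<dots> = 0" by (subst sum_lessThan_telescope) (simp add: f)
    finally show ?thesis .
  qed
  have balloc: "is_allocation n m q r b"
    using alloc bnonneg rowD colD unfolding is_allocation_def b_def
    by (simp add: sum.distrib sum_distrib_left[symmetric])
  have lex: "lex_prefers m (\<pi> i) (b i) (a i)" if i: "i < n" "\<exists>t<N. ag t = i" for i
  proof -
    define S where "S = {t. t < N \<and> ag t = i}"
    have Sfin: "finite S" "S \<noteq> {}" unfolding S_def using i by auto
    define L where "L = Min (lp ` S)"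
    obtain t0 where t0: "t0 \<in> S" "lp t0 = L" unfolding L_def using Sfin
      by (metis (no_types, lifting) Min_in empty_is_image finite_imageI imageE)
    have Lle: "\<And>t. t \<in> S \<Longrightarrow> L \<le> lp t" unfolding L_def using Sfin by auto
    have t0N: "t0 < N" "ag t0 = i" using t0 unfolding S_def by auto
    have Lm: "L < m" using t0 lpq[OF t0N(1)] lq[OF t0N(1)] by simp
    have zero: "D i (\<pi> i k) = 0" if k: "k < L" for k
      unfolding D_def
    proof (intro sum.neutral ballI)
      fix t assume t: "t \<in> {..<N}"
      show "(if ag t = i then (if \<pi> i k = f t then 1 else 0) - (if \<pi> i k = f (Suc t) then 1 else 0) else (0::real)) = 0"
      proof (cases "ag t = i")
        case True
        then have tS: "t \<in> S" using t unfolding S_def by auto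
        have km: "k < m" using k Lm by simp
        have l1: "lp t < m" using lpq lq t by (meson lessThan_iff order.strict_trans)
        have "\<pi> i k \<noteq> f t"
        proof
          assume "\<pi> i k = f t"
          then have "\<pi> i k = \<pi> i (lp t)" using fp t True by auto
          then have "k = lp t" using pi_inj i km l1 by blast
          then show False using Lle[OF tS] k by simp
        qed
        moreover have "\<pi> i k \<noteq> f (Suc t)"
        proof
          assume "\<pi> i k = f (Suc t)"
          then have "\<pi> i k = \<pi> i (lq t)" using fq t True by auto
          then have "k = lq t" using pi_inj i km lq t by blast
          then show False using Lle[OF tS] k lpq t by fastforce
        qed
        ultimately show ?thesis by simp
      qed simp
    qed
    have pos: "D i (\<pi> i L) > 0"
    proof -
      have terms: "(if ag t = i then (if \<pi> i L = f t then 1 else 0) - (if \<pi> i L = f (Suc t) then 1 else 0) else (0::real))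
          = (if ag t = i \<and> \<pi> i L = f t then 1 else 0)" if t: "t < N" for t
      proof (cases "ag t = i")
        case True
        then have tS: "t \<in> S" using t unfolding S_def by auto
        have "\<pi> i L \<noteq> f (Suc t)"
        proof
          assume "\<pi> i L = f (Suc t)"
          then have "\<pi> i L = \<pi> i (lq t)" using fq t True by auto
          then have "L = lq t" using pi_inj i Lm lq t by blast
          then show False using Lle[OF tS] lpq t by fastforce
        qed
        then show ?thesis using True by simp
      qed simp
      have "D i (\<pi> i L) = (\<Sum>t<N. if ag t = i \<and> \<pi> i L = f t then 1 else (0::real))"
        unfolding D_def using terms by (intro sum.cong) auto
      also have "\<dots> \<ge> (if ag t0 = i \<and> \<pi> i L = f t0 then 1 else (0::real))"
        by (rule member_le_sum) (use t0N in auto)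
      finally show ?thesis using t0N t0 fp by auto
    qed
    show ?thesis unfolding lex_prefers_def b_def
      using Lm zero pos \<epsilon>pos by (intro exI[of _ L]) auto
  qed
  have other: "same_share m (b i) (a i)" if "\<not> (\<exists>t<N. ag t = i)" for i
  proof -
    have "D i j = 0" for j unfolding D_def using that by (intro sum.neutral) auto
    then show ?thesis unfolding same_share_def b_def by simp
  qed
  have "\<forall>i<n. same_share m (b i) (a i) \<or> lex_prefers m (\<pi> i) (b i) (a i)"
    using lex other by blast
  moreover have "\<exists>i<n. lex_prefers m (\<pi> i) (b i) (a i)"
    using lex[of "ag 0"] ag[OF N(1)] N(1) by blast
  ultimately show False using pe balloc unfolding pareto_efficient_def by blast
qed


definition anc :: "nat \<Rightarrow> nat set" where "anc y = {x. (x, y) \<in> E\<^sup>+}"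
definition rank :: "nat \<Rightarrow> nat" where "rank y = card (anc y)"

lemma E_lt: "(x, y) \<in> E \<Longrightarrow> x < m \<and> y < m"
  unfolding E_def using pi_lt by auto

lemma anc_sub: "anc y \<subseteq> {..<m}"
proof
  fix x assume "x \<in> anc y"
  then have "(x, y) \<in> E\<^sup>+" unfolding anc_def by simp
  then obtain z where "(x, z) \<in> E" using tranclD by metis
  then show "x \<in> {..<m}" using E_lt by auto
qed

lemma rank_lt: "y < m \<Longrightarrow> rank y < m"
proof -
  assume y: "y < m"
  have "anc y \<subseteq> {..<m} - {y}" using anc_sub acyclic unfolding anc_def by auto
  then have "card (anc y) \<le> card ({..<m} - {y})" by (intro card_mono) auto
  also have "\<dots> = m - 1" using y by simp
  finally show ?thesis unfolding rank_def using y by simp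
qed

lemma rank_mono: "(x, y) \<in> E \<Longrightarrow> rank x < rank y"
proof -
  assume e: "(x, y) \<in> E"
  have "anc x \<subset> anc y"
  proof
    show "anc x \<subseteq> anc y" unfolding anc_def using e by (auto intro: trancl_into_trancl)
    have "x \<in> anc y" "x \<notin> anc x" using e acyclic unfolding anc_def by auto
    then show "anc x \<noteq> anc y" by blast
  qed
  moreover have "finite (anc y)" using anc_sub finite_subset by blast
  ultimately show ?thesis unfolding rank_def by (rule psubset_card_mono[rotated])
qed

lemma held_unique:
  assumes "i < n" "g1 < m" "g2 < m" "a i g1 > 0" "a i g2 > 0" "rank g1 = rank g2"
  shows "g1 = g2"
proof (rule ccontr)
  assume ne: "g1 \<noteq> g2"
  obtain l1 where l1: "l1 < m" "\<pi> i l1 = g1" using pi_surj assms by blast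
  obtain l2 where l2: "l2 < m" "\<pi> i l2 = g2" using pi_surj assms by blast
  have "l1 \<noteq> l2" using ne l1 l2 by auto
  then consider "l1 < l2" | "l2 < l1" by linarith
  then show False
  proof cases
    case 1
    then have "(g1, g2) \<in> E" unfolding E_def using assms l1 l2 by blast
    then show False using rank_mono assms by fastforce
  next
    case 2
    then have "(g2, g1) \<in> E" unfolding E_def using assms l1 l2 by blast
    then show False using rank_mono assms by fastforce
  qed
qed

lemma pref_lower:
  assumes "i < n" "a i g > 0" "l < m" "\<pi> i l = g" "k < l"
  shows "rank (\<pi> i k) < rank g"
proof -
  have "(\<pi> i k, g) \<in> E" unfolding E_def using assms by blast
  then show ?thesis by (rule rank_mono)
qed

definition I :: "nat \<Rightarrow> real set" where
  "I k = {real k / real m ..< (real k + 1) / real m}"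

definition eta :: "nat \<Rightarrow> real \<Rightarrow> real" where
  "eta i s = (\<Sum>j<m. real m * a i j * indicator (I (rank j)) s)"

definition tau0 :: "nat \<Rightarrow> real" where
  "tau0 j = (real (rank j) + 1) / real m"

definition Hs :: "(nat \<Rightarrow> real) \<Rightarrow> real \<Rightarrow> bool" where
  "Hs \<tau> s \<longleftrightarrow> (\<forall>k<m. s \<in> I k \<longrightarrow> (\<forall>j'<m. rank j' < k \<longrightarrow> \<tau> j' \<le> s) \<and> (\<forall>g<m. rank g = k \<longrightarrow> s < \<tau> g))"

lemma I_mpos: "s \<in> I k \<Longrightarrow> m > 0"
  unfolding I_def by (cases "m = 0") auto

lemma I_bounds: "s \<in> I k \<Longrightarrow> real k \<le> s * real m \<and> s * real m < real k + 1"
proof -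
  assume s: "s \<in> I k"
  then have m: "real m > 0" using I_mpos by simp
  from s have "real k / real m \<le> s" "s < (real k + 1) / real m" unfolding I_def by auto
  then show ?thesis using m by (simp add: field_simps)
qed

lemma I_disj: "s \<in> I k \<Longrightarrow> s \<in> I k' \<Longrightarrow> k = k'"
proof -
  assume "s \<in> I k" "s \<in> I k'"
  then have "real k \<le> s * real m" "s * real m < real k + 1" "real k' \<le> s * real m" "s * real m < real k' + 1"
    using I_bounds by blast+
  then show "k = k'" by linarith
qed

lemma cur:
  assumes i: "i < n" and g: "g < m" "a i g > 0" and s: "s \<in> I (rank g)" and H: "Hs \<tau> s"
  shows "sg_current m \<pi> \<tau> i s = Some g"
proof -
  obtain l0 where l0: "l0 < m" "\<pi> i l0 = g" using pi_surj i g by blast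
  have rg: "rank g < m" using rank_lt g by simp
  have sg: "s < \<tau> g" using H s rg g unfolding Hs_def by blast
  have low: "\<tau> (\<pi> i k) \<le> s" if "k < l0" for k
  proof -
    have "rank (\<pi> i k) < rank g" using pref_lower[OF i g(2) l0 that] .
    moreover have "\<pi> i k < m" using pi_lt i that l0 by simp
    ultimately show ?thesis using H s rg unfolding Hs_def by blast
  qed
  have ex: "\<exists>k<m. s < \<tau> (\<pi> i k)" using l0 sg by blast
  have least: "(LEAST k. k < m \<and> s < \<tau> (\<pi> i k)) = l0"
  proof (rule Least_equality)
    show "l0 < m \<and> s < \<tau> (\<pi> i l0)" using l0 sg by simp
    fix y assume "y < m \<and> s < \<tau> (\<pi> i y)"
    then show "l0 \<le> y" using low by (meson leI linorder_not_le)
  qed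
  show ?thesis unfolding sg_current_def using ex least l0 by simp
qed

lemma eta_at:
  assumes "k < m" "s \<in> I k"
  shows "eta i s = (\<Sum>j<m. if rank j = k then real m * a i j else 0)"
  unfolding eta_def using I_disj assms by (intro sum.cong refl) (auto simp: indicator_def)

lemma eta_out:
  assumes "\<not> (\<exists>k<m. s \<in> I k)"
  shows "eta i s = 0"
  unfolding eta_def using assms rank_lt by (intro sum.neutral) (auto simp: indicator_def)

lemma PW:
  assumes i: "i < n" and j: "j < m" and H: "Hs \<tau> s"
  shows "(if sg_current m \<pi> \<tau> i s = Some j then eta i s else 0) = real m * a i j * indicator (I (rank j)) s"
proof (cases "\<exists>k<m. s \<in> I k")
  case False
  then have "s \<notin> I (rank j)" using rank_lt j by blast
  then show ?thesis using eta_out[OF False] by simp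
next
  case True
  then obtain k where k: "k < m" "s \<in> I k" by blast
  show ?thesis
  proof (cases "\<exists>g<m. rank g = k \<and> a i g > 0")
    case True
    then obtain g where g: "g < m" "rank g = k" "a i g > 0" by blast
    have "eta i s = (\<Sum>j<m. if j = g then real m * a i j else 0)"
      unfolding eta_at[OF k]
    proof (intro sum.cong refl)
      fix j' assume j': "j' \<in> {..<m}"
      show "(if rank j' = k then real m * a i j' else 0) = (if j' = g then real m * a i j' else 0)"
      proof (cases "j' = g")
        case True then show ?thesis using g by simp
      next
        case False
        show ?thesis
        proof (cases "rank j' = k")
          case True
          then have "\<not> a i j' > 0" using held_unique[OF i _ g(1) _ g(3)] g(2) j' False by auto
          then have "a i j' = 0" using anonneg i j' by force
          then show ?thesis using False by simp
        qed (use False in simp)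
      qed
    qed
    also have "\<dots> = real m * a i g" using g by simp
    finally have eta: "eta i s = real m * a i g" .
    have c: "sg_current m \<pi> \<tau> i s = Some g" using cur[OF i g(1) g(3)] g(2) k H by simp
    show ?thesis
    proof (cases "j = g")
      case True then show ?thesis using c eta g k by simp
    next
      case False
      have "a i j * indicator (I (rank j)) s = 0"
      proof (cases "rank j = k")
        case True
        then have "\<not> a i j > 0" using held_unique[OF i j g(1) _ g(3)] g(2) False by auto
        then have "a i j = 0" using anonneg i j by force
        then show ?thesis by simp
      next
        case False then show ?thesis using I_disj k by (auto simp: indicator_def)
      qed
      then show ?thesis using c False by simp
    qed
  next
    case False
    have "eta i s = 0" unfolding eta_at[OF k]
    proof (intro sum.neutral ballI)
      fix j' assume "j' \<in> {..<m}"
      then show "(if rank j' = k then real m * a i j' else 0) = 0"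
        using False anonneg[OF i, of j'] by force
    qed
    moreover have "a i j * indicator (I (rank j)) s = 0"
    proof (cases "rank j = k")
      case True
      then have "a i j = 0" using False anonneg[OF i j] j by force
      then show ?thesis by simp
    next
      case False then show ?thesis using I_disj k by (auto simp: indicator_def)
    qed
    ultimately show ?thesis by simp
  qed
qed


lemma I_sub: "real k / real m \<le> (real k + 1) / real m"
  by (simp add: divide_right_mono)

lemma meas_int2:
  fixes t u v :: real assumes "0 \<le> u" "u \<le> v"
  shows "measure lborel ({0..<t} \<inter> {u..<v}) = (if t < u then 0 else if t < v then t - u else v - u)"
proof (cases "t < u")
  case True
  then have "{0..<t} \<inter> {u..<v} = {}" by auto
  then show ?thesis using True by simp
next
  case False
  show ?thesis
  proof (cases "t < v")
    case True
    then have "{0..<t} \<inter> {u..<v} = {u..<t}" using False assms by auto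
    then show ?thesis using True False by simp
  next
    case F2: False
    then have "{0..<t} \<inter> {u..<v} = {u..<v}" using False assms by auto
    then show ?thesis using F2 False assms by simp
  qed
qed

definition ph :: "nat \<Rightarrow> real \<Rightarrow> real" where
  "ph k t = (if t < real k / real m then 0 else if t < (real k + 1) / real m then t - real k / real m else 1 / real m)"

lemma meas_I: "m > 0 \<Longrightarrow> measure lborel ({0..<t} \<inter> I k) = ph k t"
proof -
  have e: "(real k + 1) / real m - real k / real m = 1 / real m" by (simp add: diff_divide_distrib[symmetric])
  show "m > 0 \<Longrightarrow> measure lborel ({0..<t} \<inter> I k) = ph k t"
    unfolding I_def ph_def using I_sub[of k] e by (subst meas_int2) auto
qed

lemma amt:
  assumes i: "i < n" and j: "j < m" and H: "\<forall>s. 0 \<le> s \<longrightarrow> s < t \<longrightarrow> Hs \<tau> s"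
  shows "sg_amount m eta \<pi> \<tau> i j t = real m * a i j * ph (rank j) t"
proof -
  define f where "f s = (if sg_current m \<pi> \<tau> i s = Some j then eta i s else 0)" for s
  define c where "c = real m * a i j"
  define d where "d = (if 0 \<le> t then f t else 0)"
  have eq: "(\<lambda>s. indicator {0..t} s *\<^sub>R f s) = (\<lambda>s. c * indicator ({0..<t} \<inter> I (rank j)) s + d * indicator {t} s)"
  proof
    fix s
    show "indicator {0..t} s *\<^sub>R f s = c * indicator ({0..<t} \<inter> I (rank j)) s + d * indicator {t} s"
    proof (cases "s \<in> {0..<t}")
      case True
      then have "f s = c * indicator (I (rank j)) s" unfolding f_def c_def using PW[OF i j] H by auto
      then show ?thesis using True by (auto simp: indicator_def)
    next
      case False
      then show ?thesis unfolding d_def by (auto simp: indicator_def)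
    qed
  qed
  have fin: "emeasure lborel ({0..<t} \<inter> I (rank j)) < \<infinity>"
  proof -
    have z: "0 \<le> real (rank j) / real m" by simp
    have "emeasure lborel ({0..<t} \<inter> I (rank j)) \<le> emeasure lborel {0..t}"
      by (intro emeasure_mono subsetI) (auto simp: I_def intro: order_trans[OF z])
    also have "\<dots> < \<infinity>" by (simp add: emeasure_lborel_Icc_eq)
    finally show ?thesis .
  qed
  have s1: "integrable lborel (indicator ({0..<t} \<inter> I (rank j)) :: real \<Rightarrow> real)"
    using fin by (intro integrable_real_indicator) (auto simp: I_def)
  have s2: "integrable lborel (indicator {t} :: real \<Rightarrow> real)"
    by (intro integrable_real_indicator) auto
  have "sg_amount m eta \<pi> \<tau> i j t = integral\<^sup>L lborel (\<lambda>s. c * indicator ({0..<t} \<inter> I (rank j)) s + d * indicator {t} s)"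
    unfolding sg_amount_def set_lebesgue_integral_def f_def[symmetric] eq ..
  also have "\<dots> = c * measure lborel ({0..<t} \<inter> I (rank j)) + d * measure lborel {t}"
    using s1 s2 fin by (simp add: I_def)
  also have "measure lborel {t} = 0"
    using measure_lborel_Icc[of t t] by simp
  finally show ?thesis unfolding c_def using meas_I j by simp
qed

lemma sumamt:
  assumes j: "j < m" and H: "\<forall>s. 0 \<le> s \<longrightarrow> s < t \<longrightarrow> Hs \<tau> s"
  shows "(\<Sum>i<n. sg_amount m eta \<pi> \<tau> i j t) = real m * q j * ph (rank j) t"
proof -
  have "(\<Sum>i<n. sg_amount m eta \<pi> \<tau> i j t) = (\<Sum>i<n. (real m * ph (rank j) t) * a i j)"
    using amt[OF _ j H] by (intro sum.cong) auto
  also have "\<dots> = (\<Sum>i<n. a i j) * (real m * ph (rank j) t)"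
    by (simp add: sum_distrib_right mult.commute)
  also have "(\<Sum>i<n. a i j) = q j" using alloc j unfolding is_allocation_def by blast
  finally show ?thesis by simp
qed

lemma ph_top: "m > 0 \<Longrightarrow> ph k ((real k + 1) / real m) = 1 / real m"
  unfolding ph_def by (auto simp: field_simps)

lemma ph_lt: "m > 0 \<Longrightarrow> t < (real k + 1) / real m \<Longrightarrow> ph k t < 1 / real m"
proof -
  assume m: "m > 0" and t: "t < (real k + 1) / real m"
  have e: "(real k + 1) / real m = real k / real m + 1 / real m" by (simp add: add_divide_distrib)
  show ?thesis unfolding ph_def using m t e by auto
qed

lemma ph_one: "k < m \<Longrightarrow> ph k 1 = 1 / real m"
  unfolding ph_def by (auto simp: field_simps)

lemma Hs_tau0: "Hs tau0 s"
  unfolding Hs_def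
proof (intro allI impI conjI)
  fix k j' assume k: "k < m" "s \<in> I k" and j': "j' < m" "rank j' < k"
  have m: "real m > 0" using k by simp
  have "real (rank j') + 1 \<le> real k" using j' by linarith
  then have "tau0 j' \<le> real k / real m" unfolding tau0_def using m by (simp add: divide_right_mono)
  also have "\<dots> \<le> s" using k unfolding I_def by auto
  finally show "tau0 j' \<le> s" .
next
  fix k g assume k: "k < m" "s \<in> I k" and g: "g < m" "rank g = k"
  then show "s < tau0 g" unfolding tau0_def I_def by auto
qed

lemma Hs_below:
  assumes IH: "\<forall>j<m. rank j < k \<longrightarrow> \<tau> j = tau0 j"
    and G: "\<forall>g<m. rank g = k \<longrightarrow> t \<le> \<tau> g"
    and t: "t \<le> (real k + 1) / real m"
    and s: "0 \<le> s" "s < t"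
  shows "Hs \<tau> s"
  unfolding Hs_def
proof (intro allI impI conjI)
  fix k' assume k': "k' < m" "s \<in> I k'"
  have m: "real m > 0" using k' by simp
  have "real k' \<le> s * real m" using I_bounds[OF k'(2)] by simp
  moreover have "s * real m < real k + 1"
  proof -
    have "t * real m \<le> real k + 1" using t m by (simp add: field_simps)
    moreover have "s * real m < t * real m" using s m by simp
    ultimately show ?thesis by linarith
  qed
  ultimately have kk: "k' \<le> k" by linarith
  {
    fix j' assume j': "j' < m" "rank j' < k'"
    then have "\<tau> j' = tau0 j'" using IH kk by auto
    then show "\<tau> j' \<le> s" using Hs_tau0 k' j' unfolding Hs_def by auto
  next
    fix g assume g: "g < m" "rank g = k'"
    show "s < \<tau> g"
    proof (cases "k' < k")
      case True
      then have "\<tau> g = tau0 g" using IH g by auto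
      then show ?thesis using Hs_tau0 k' g unfolding Hs_def by auto
    next
      case False
      then have "rank g = k" using kk g by simp
      then show ?thesis using G g s by fastforce
    qed
  }
qed


lemma tau0_run: "sg_run n m q eta \<pi> tau0"
  unfolding sg_run_def
proof (intro allI impI)
  fix j assume j: "j < m"
  have m: "real m > 0" using j by simp
  have rk: "rank j < m" using rank_lt j by simp
  have H: "\<forall>s. 0 \<le> s \<longrightarrow> s < t \<longrightarrow> Hs tau0 s" for t using Hs_tau0 by blast
  have A: "0 \<le> tau0 j" unfolding tau0_def by simp
  have B: "tau0 j \<le> 1" unfolding tau0_def using rk m by (simp add: field_simps)
  have C: "(\<Sum>i<n. sg_amount m eta \<pi> tau0 i j (tau0 j)) = q j"
    using sumamt[OF j H] ph_top[of "rank j"] m unfolding tau0_def by simp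
  have D: "\<forall>t. 0 \<le> t \<and> t < tau0 j \<longrightarrow> (\<Sum>i<n. sg_amount m eta \<pi> tau0 i j t) < q j"
  proof (intro allI impI)
    fix t assume t: "0 \<le> t \<and> t < tau0 j"
    have "ph (rank j) t < 1 / real m" using ph_lt[where k="rank j" and t=t] m t unfolding tau0_def by simp
    then have "real m * q j * ph (rank j) t < real m * q j * (1 / real m)"
      using m qpos j by (intro mult_strict_left_mono) auto
    then show "(\<Sum>i<n. sg_amount m eta \<pi> tau0 i j t) < q j" using sumamt[OF j H] m by simp
  qed
  show "0 \<le> tau0 j \<and> tau0 j \<le> 1 \<and> (\<Sum>i<n. sg_amount m eta \<pi> tau0 i j (tau0 j)) = q j \<and>
     (\<forall>t. 0 \<le> t \<and> t < tau0 j \<longrightarrow> (\<Sum>i<n. sg_amount m eta \<pi> tau0 i j t) < q j)"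
    using A B C D by blast
qed

lemma run_unique:
  assumes run: "sg_run n m q eta \<pi> \<tau>"
  shows "\<forall>j<m. \<tau> j = tau0 j"
proof -
  have "\<forall>j<m. rank j < k \<longrightarrow> \<tau> j = tau0 j" for k
  proof (induction k)
    case 0 then show ?case by simp
  next
    case (Suc k)
    note IH = Suc.IH
    show ?case
    proof (intro allI impI)
      fix j assume j: "j < m" and rj: "rank j < Suc k"
      show "\<tau> j = tau0 j"
      proof (cases "rank j < k")
        case True then show ?thesis using IH j by blast
      next
        case False
        then have rjk: "rank j = k" using rj by simp
        have m: "real m > 0" using j by simp
        have G: "\<forall>g<m. rank g = k \<longrightarrow> (real k + 1) / real m \<le> \<tau> g"
        proof (rule ccontr)
          assume "\<not> ?thesis"
          then obtain g where g: "g < m" "rank g = k" "\<tau> g < (real k + 1) / real m" by force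
          define S where "S = {g. g < m \<and> rank g = k}"
          have Sfin: "finite S" "S \<noteq> {}" unfolding S_def using g by auto
          define T where "T = Min (\<tau> ` S)"
          obtain g0 where g0: "g0 \<in> S" "\<tau> g0 = T" unfolding T_def using Sfin
            by (metis (no_types, lifting) Min_in empty_is_image finite_imageI imageE)
          have Tle: "\<And>g. g \<in> S \<Longrightarrow> T \<le> \<tau> g" unfolding T_def using Sfin by auto
          have TG: "\<forall>g<m. rank g = k \<longrightarrow> T \<le> \<tau> g" using Tle unfolding S_def by auto
          have Tlt: "T < (real k + 1) / real m" using Tle[of g] g unfolding S_def by force
          have g0m: "g0 < m" "rank g0 = k" using g0 unfolding S_def by auto
          have H: "\<forall>s. 0 \<le> s \<longrightarrow> s < T \<longrightarrow> Hs \<tau> s"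
            using Hs_below[OF IH TG] Tlt by auto
          have "(\<Sum>i<n. sg_amount m eta \<pi> \<tau> i g0 T) = real m * q g0 * ph k T"
            using sumamt[OF g0m(1) H] g0m by simp
          also have "\<dots> < real m * q g0 * (1 / real m)"
            using ph_lt[where k=k and t=T] m Tlt qpos g0m by (intro mult_strict_left_mono) auto
          also have "\<dots> = q g0" using m by simp
          finally have "(\<Sum>i<n. sg_amount m eta \<pi> \<tau> i g0 T) < q g0" .
          moreover have "(\<Sum>i<n. sg_amount m eta \<pi> \<tau> i g0 (\<tau> g0)) = q g0"
            using run g0m unfolding sg_run_def by blast
          ultimately show False using g0 by simp
        qed
        define t1 where "t1 = (real k + 1) / real m"
        have H: "\<forall>s. 0 \<le> s \<longrightarrow> s < t1 \<longrightarrow> Hs \<tau> s"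
          using Hs_below[OF IH G] unfolding t1_def by auto
        have sum1: "(\<Sum>i<n. sg_amount m eta \<pi> \<tau> i j t1) = q j"
          using sumamt[OF j H] rjk ph_top[of k] m unfolding t1_def by simp
        have "\<not> t1 < \<tau> j"
        proof
          assume "t1 < \<tau> j"
          moreover have "0 \<le> t1" unfolding t1_def by simp
          ultimately have "(\<Sum>i<n. sg_amount m eta \<pi> \<tau> i j t1) < q j"
            using run j unfolding sg_run_def by blast
          then show False using sum1 by simp
        qed
        moreover have "t1 \<le> \<tau> j" using G j rjk unfolding t1_def by blast
        ultimately show ?thesis unfolding tau0_def t1_def using rjk by simp
      qed
    qed
  qed
  then show ?thesis by blast
qed

lemma Hs_cong: "\<forall>j<m. \<tau> j = \<tau>' j \<Longrightarrow> Hs \<tau> s = Hs \<tau>' s"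
  unfolding Hs_def by auto

lemma produces: "sg_produces n m q eta \<pi> a"
  unfolding sg_produces_def
proof (intro conjI allI impI)
  show "\<exists>\<tau>. sg_run n m q eta \<pi> \<tau>" using tau0_run by blast
  fix \<tau> i j assume run: "sg_run n m q eta \<pi> \<tau>" and i: "i < n" and j: "j < m"
  have "\<forall>j<m. \<tau> j = tau0 j" using run_unique[OF run] .
  then have H: "\<forall>s. 0 \<le> s \<longrightarrow> s < 1 \<longrightarrow> Hs \<tau> s" using Hs_cong Hs_tau0 by blast
  have m: "real m > 0" using j by simp
  show "sg_amount m eta \<pi> \<tau> i j 1 = a i j"
    using amt[OF i j H] ph_one[OF rank_lt[OF j]] m by simp
qed

lemma speed: assumes i: "i < n" shows "speed_function (eta i) (r i)"
proof -
  have trm: "set_integrable lborel {0..1} (\<lambda>s. real m * a i j * indicator (I (rank j)) s)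
     \<and> set_lebesgue_integral lborel {0..1} (\<lambda>s. real m * a i j * indicator (I (rank j)) s) = a i j"
    if j: "j < m" for j
  proof -
    have m: "real m > 0" using j by simp
    have rk: "rank j < m" using rank_lt j by simp
    have le1: "(real (rank j) + 1) / real m \<le> 1" using rk m by (simp add: field_simps)
    have "measure lborel ({0..1} \<inter> I (rank j)) = 1 / real m"
      unfolding I_def using le1 I_sub[of "rank j"]
      by (subst meas_int) (auto simp: diff_divide_distrib[symmetric])
    then show ?thesis using ind_int[OF I_sub[of "rank j"], of 1 "real m * a i j"] m unfolding I_def by simp
  qed
  have nonneg: "\<forall>t\<in>{0..1}. 0 \<le> eta i t"
    unfolding eta_def using anonneg[OF i] by (auto intro!: sum_nonneg)
  have int: "set_integrable lborel {0..1::real} (eta i)"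
  proof -
    have "integrable lborel (\<lambda>x. \<Sum>j<m. indicator {0..1::real} x *\<^sub>R (real m * a i j * indicator (I (rank j)) x))"
      by (rule Bochner_Integration.integrable_sum) (use trm in \<open>auto simp: set_integrable_def\<close>)
    moreover have "(\<lambda>x. indicator {0..1::real} x *\<^sub>R eta i x) = (\<lambda>x. \<Sum>j<m. indicator {0..1::real} x *\<^sub>R (real m * a i j * indicator (I (rank j)) x))"
      by (rule ext) (simp only: eta_def scaleR_sum_right)
    ultimately show ?thesis unfolding set_integrable_def by simp
  qed
  have "set_lebesgue_integral lborel {0..1::real} (eta i) = (\<Sum>j<m. a i j)"
  proof -
    have "(\<lambda>x. indicator {0..1::real} x *\<^sub>R eta i x) = (\<lambda>x. \<Sum>j<m. indicator {0..1::real} x *\<^sub>R (real m * a i j * indicator (I (rank j)) x))"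
      by (rule ext) (simp only: eta_def scaleR_sum_right)
    then have "set_lebesgue_integral lborel {0..1::real} (eta i) = integral\<^sup>L lborel (\<lambda>x. \<Sum>j<m. indicator {0..1::real} x *\<^sub>R (real m * a i j * indicator (I (rank j)) x))"
      unfolding set_lebesgue_integral_def by simp
    also have "\<dots> = (\<Sum>j<m. integral\<^sup>L lborel (\<lambda>x. indicator {0..1::real} x *\<^sub>R (real m * a i j * indicator (I (rank j)) x)))"
      by (rule Bochner_Integration.integral_sum) (use trm in \<open>auto simp: set_integrable_def\<close>)
    also have "\<dots> = (\<Sum>j<m. a i j)"
      using trm unfolding set_lebesgue_integral_def by (intro sum.cong) auto
    finally show ?thesis .
  qed
  also have "\<dots> = r i" using alloc i unfolding is_allocation_def by blast
  finally show ?thesis unfolding speed_function_def using nonneg int by blast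
qed

end

theorem theorem6:
  fixes n m :: nat and q r :: "nat \<Rightarrow> real" and \<pi> :: "nat \<Rightarrow> nat \<Rightarrow> nat"
    and a :: "nat \<Rightarrow> nat \<Rightarrow> real"
  assumes "\<forall>j<m. q j > 0"
    and "\<forall>i<n. r i > 0"
    and "(\<Sum>j<m. q j) = (\<Sum>i<n. r i)"
    and "\<forall>i<n. is_pref_list m (\<pi> i)"
    and "pareto_efficient n m q r \<pi> a"
  shows "\<exists>\<eta> :: nat \<Rightarrow> real \<Rightarrow> real.
           (\<forall>i<n. speed_function (\<eta> i) (r i)) \<and> sg_produces n m q \<eta> \<pi> a"
proof -
  interpret sgl n m q r \<pi> a using assms by unfold_locales auto
  show ?thesis using speed produces by blast
qed

end
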